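(* Let $L\ge 1$, let $M_1,\dots,M_5\ge 2$, $N_1,\dots,N_4\ge 1$, and let $K_5\ge 2$ be an integer. For $l=1,\dots,L$ and $n=1,\dots,5$ let $\omega_{l,n}\in\mathbb{R}$, and put $\boldsymbol{\Phi}_n=\mathrm{Diag}(e^{\jmath\omega_{1,n}},\dots,e^{\jmath\omega_{L,n}})$. For $n=1,2,3,4$ assume the following: (i) $\boldsymbol{T}_n\in\mathbb{C}^{M_n\times N_n}$ satisfies $\boldsymbol{J}_{n,1}\boldsymbol{T}_n=\boldsymbol{J}_{n,2}\boldsymbol{T}_n\boldsymbol{F}_n$ for some non-singular $\boldsymbol{F}_n\in\mathbb{C}^{N_n\times N_n}$, where $\boldsymbol{J}_{n,1}=[\boldsymbol{I}_{M_n-1},\boldsymbol{0}_{(M_n-1)\times 1}]$ and $\boldsymbol{J}_{n,2}=[\boldsymbol{0}_{(M_n-1)\times 1},\boldsymbol{I}_{M_n-1}]$; (ii) writing $\boldsymbol{T}_n^{\mathrm{H}}=[\boldsymbol{t}_{n,1},\dots,\boldsymbol{t}_{n,M_n}]$ with $\boldsymbol{t}_{n,m}\in\mathbb{C}^{N_n}$, $\boldsymbol{Q}_n\in\mathbb{C}^{N_n\times N_n}$ is a matrix with $\boldsymbol{Q}_n\boldsymbol{t}_{n,M_n}=\boldsymbol{0}$ and $\boldsymbol{Q}_n\boldsymbol{F}_n^{\mathrm{H}}\boldsymbol{t}_{n,1}=\boldsymbol{0}$, and $\boldsymbol{L}_{n,1}=\boldsymbol{Q}_n$, $\boldsymbol{L}_{n,2}=\boldsymbol{Q}_n\boldsymbol{F}_n^{\mathrm{H}}$.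 Let $\boldsymbol{B}_n=\boldsymbol{T}_n^{\mathrm{H}}\boldsymbol{A}_n^{(M_n)}$ for $n=1,\dots,4$ and $\boldsymbol{P}=\boldsymbol{B}_1\odot\boldsymbol{B}_2\odot\boldsymbol{B}_3\odot\boldsymbol{B}_4\odot\boldsymbol{A}_5^{(K_5)}$. Define, for $i=1,2$, $\breve{\boldsymbol{J}}_{n,i}=\boldsymbol{I}_{N_1}\otimes\cdots\otimes\boldsymbol{L}_{n,i}\otimes\cdots\otimes\boldsymbol{I}_{N_4}\otimes\boldsymbol{I}_{K_5}$ for $n=1,2,3,4$ (with $\boldsymbol{L}_{n,i}$ in the $n$-th Kronecker factor and identities $\boldsymbol{I}_{N_k}$ in the other factors $k\neq n$, $k\le 4$), and $\breve{\boldsymbol{J}}_{5,i}=\boldsymbol{I}_{N_1}\otimes\boldsymbol{I}_{N_2}\otimes\boldsymbol{I}_{N_3}\otimes\boldsymbol{I}_{N_4}\otimes\bar{\boldsymbol{J}}_{5,i}$, where $\bar{\boldsymbol{J}}_{5,1}=[\boldsymbol{I}_{K_5-1},\boldsymbol{0}_{(K_5-1)\times1}]$ and $\bar{\boldsymbol{J}}_{5,2}=[\boldsymbol{0}_{(K_5-1)\times1},\boldsymbol{I}_{K_5-1}]$. Then for every $n=1,\dots,5$, $$\breve{\boldsymbol{J}}_{n,1}\boldsymbol{P}\boldsymbol{\Phi}_n=\breve{\boldsymbol{J}}_{n,2}\boldsymbol{P}.$$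
   Context: $\jmath$ is the imaginary unit. For $M\ge1$ and $\omega\in\mathbb{R}$, $\boldsymbol{a}^{(M)}(\omega)=[1,e^{\jmath\omega},\dots,e^{\jmath(M-1)\omega}]^{\mathrm{T}}$, and for any positive integer $K$, $\boldsymbol{A}_n^{(K)}=[\boldsymbol{a}^{(K)}(\omega_{1,n}),\dots,\boldsymbol{a}^{(K)}(\omega_{L,n})]\in\mathbb{C}^{K\times L}$. $\otimes$ is the Kronecker product and $\odot$ is the Khatri–Rao (column-wise Kronecker) product. $(\cdot)^{\mathrm{H}}$ is conjugate transpose. *)

theory Defs
  imports Complex_Main "Jordan_Normal_Form.Schur_Decomposition"
begin

definition kron :: "complex mat \<Rightarrow> complex mat \<Rightarrow> complex mat" where
  "kron A B = mat (dim_row A * dim_row B) (dim_col A * dim_col B)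
     (\<lambda>(r, c). A $$ (r div dim_row B, c div dim_col B) * B $$ (r mod dim_row B, c mod dim_col B))"

definition khatri_rao :: "complex mat \<Rightarrow> complex mat \<Rightarrow> complex mat" where
  "khatri_rao A B = mat (dim_row A * dim_row B) (dim_col A)
     (\<lambda>(r, c). A $$ (r div dim_row B, c) * B $$ (r mod dim_row B, c))"

text \<open>Steering matrix A_n^(K) = [a^(K)(omega_{1,n}), ..., a^(K)(omega_{L,n})];
  omega l n is omega_{l,n} (l = 1..L); row k (0-based) of column l is exp(j k omega_{l,n}).\<close>
definition steer :: "nat \<Rightarrow> nat \<Rightarrow> (nat \<Rightarrow> nat \<Rightarrow> real) \<Rightarrow> nat \<Rightarrow> complex mat" where
  "steer K L omega n = mat K L (\<lambda>(k, l). exp (\<i> * complex_of_real (real k * omega (Suc l) n)))"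

definition Phi :: "nat \<Rightarrow> (nat \<Rightarrow> nat \<Rightarrow> real) \<Rightarrow> nat \<Rightarrow> complex mat" where
  "Phi L omega n = mat L L (\<lambda>(i, j). if i = j then exp (\<i> * complex_of_real (omega (Suc i) n)) else 0)"

definition sel1 :: "nat \<Rightarrow> complex mat" where
  "sel1 M = mat (M - 1) M (\<lambda>(i, j). if j = i then 1 else 0)"

definition sel2 :: "nat \<Rightarrow> complex mat" where
  "sel2 M = mat (M - 1) M (\<lambda>(i, j). if j = i + 1 then 1 else 0)"

end

theory Submission imports Defs begin

lemma sum_mult_reindex: "(\<Sum>k<a*b. f k) = (\<Sum>i<a. \<Sum>j<b. f (i*b+j :: nat) :: 'a::comm_monoid_add)"
proof (induction a)
  case 0 then show ?case by simp
next
  case (Suc a)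
  have "(\<Sum>k<Suc a*b. f k) = (\<Sum>k<a*b. f k) + (\<Sum>k\<in>{a*b..<a*b+b}. f k)"
    by (simp add: add.commute sum.atLeastLessThan_concat lessThan_atLeast0 sum.atLeastLessThan_concat[symmetric])
  also have "(\<Sum>k\<in>{a*b..<a*b+b}. f k) = (\<Sum>j<b. f (a*b+j))"
    using sum.shift_bounds_nat_ivl[of f 0 "a*b" b] by (simp add: lessThan_atLeast0 add.commute)
  finally show ?case using Suc by simp
qed

lemma adj_eq: "mat_adjoint A = mat (dim_col A) (dim_row A) (\<lambda>(i,j). conjugate (A $$ (j,i)))"
  unfolding mat_adjoint_def
  by (rule eq_matI) (auto simp: mat_of_rows_index)

lemma adj_carrier[simp]: "A \<in> carrier_mat m n \<Longrightarrow> mat_adjoint A \<in> carrier_mat n m"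
  by (simp add: adj_eq)

lemma kr_carrier[simp]: "khatri_rao X Y \<in> carrier_mat (dim_row X * dim_row Y) (dim_col X)"
  by (simp add: khatri_rao_def)
lemma kr_dims[simp]: "dim_row (khatri_rao X Y) = dim_row X * dim_row Y" "dim_col (khatri_rao X Y) = dim_col X"
  by (simp_all add: khatri_rao_def)
lemma kron_dims[simp]: "dim_row (kron X Y) = dim_row X * dim_row Y" "dim_col (kron X Y) = dim_col X * dim_col Y"
  by (simp_all add: kron_def)

lemma kron_kr:
  assumes A: "A \<in> carrier_mat m1 n1" and B: "B \<in> carrier_mat m2 n2"
    and X: "X \<in> carrier_mat n1 c" and Y: "Y \<in> carrier_mat n2 c"
  shows "kron A B * khatri_rao X Y = khatri_rao (A * X) (B * Y)"
proof (rule eq_matI)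
  fix r j assume r: "r < dim_row (khatri_rao (A * X) (B * Y))" and j: "j < dim_col (khatri_rao (A * X) (B * Y))"
  then have r': "r < m1 * m2" and j': "j < c" using A B X by auto
  then have m2: "m2 > 0" by (cases m2) auto
  have d: "r div m2 < m1" using r' by (simp add: less_mult_imp_div_less)
  have md: "r mod m2 < m2" using m2 by simp
  have "(kron A B * khatri_rao X Y) $$ (r, j) = (\<Sum>k<n1*n2. (A $$ (r div m2, k div n2) * B $$ (r mod m2, k mod n2)) * (X $$ (k div n2, j) * Y $$ (k mod n2, j)))"
    using A B X Y r' j' by (simp add: kron_def khatri_rao_def scalar_prod_def lessThan_atLeast0 row_def col_def)
  also have "\<dots> = (\<Sum>i<n1. \<Sum>l<n2. (A $$ (r div m2, i) * X $$ (i, j)) * (B $$ (r mod m2, l) * Y $$ (l, j)))"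
    by (subst sum_mult_reindex) (auto intro!: sum.cong simp: mult_ac)
  also have "\<dots> = (\<Sum>i<n1. A $$ (r div m2, i) * X $$ (i, j)) * (\<Sum>l<n2. B $$ (r mod m2, l) * Y $$ (l, j))"
    by (simp add: sum_product)
  also have "\<dots> = khatri_rao (A * X) (B * Y) $$ (r, j)"
    using A B X Y r' j' d md by (simp add: khatri_rao_def scalar_prod_def lessThan_atLeast0 row_def col_def)
  finally show "(kron A B * khatri_rao X Y) $$ (r, j) = khatri_rao (A * X) (B * Y) $$ (r, j)" .
qed (use A B X Y in auto)

definition ee :: "(nat \<Rightarrow> nat \<Rightarrow> real) \<Rightarrow> nat \<Rightarrow> nat \<Rightarrow> complex" where
  "ee omega n c = exp (\<i> * complex_of_real (omega (Suc c) n))"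

lemma Phi_carrier[simp]: "Phi L omega n \<in> carrier_mat L L" by (simp add: Phi_def)

lemma mult_Phi: assumes "dim_col X = L"
  shows "X * Phi L omega n = mat (dim_row X) L (\<lambda>(r,c). X $$ (r,c) * ee omega n c)"
proof (rule eq_matI)
  fix i j assume i: "i < dim_row (mat (dim_row X) L (\<lambda>(r,c). X $$ (r,c) * ee omega n c))"
    and j: "j < dim_col (mat (dim_row X) L (\<lambda>(r,c). X $$ (r,c) * ee omega n c))"
  have "(X * Phi L omega n) $$ (i,j) = (\<Sum>k\<in>{0..<L}. X $$ (i,k) * (if k = j then ee omega n j else 0))"
    using i j assms by (auto simp: Phi_def scalar_prod_def ee_def intro!: sum.cong)
  also have "\<dots> = X $$ (i,j) * ee omega n j"
    using j by (simp add: if_distrib cong: if_cong)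
  finally show "(X * Phi L omega n) $$ (i,j) = mat (dim_row X) L (\<lambda>(r,c). X $$ (r,c) * ee omega n c) $$ (i,j)"
    using i j by simp
qed (use assms in \<open>auto simp: Phi_def\<close>)

lemma kr_Phi1: assumes "dim_col X = L" "dim_col Y = L"
  shows "khatri_rao X Y * Phi L omega n = khatri_rao (X * Phi L omega n) Y"
proof (rule eq_matI)
  fix i j assume "i < dim_row (khatri_rao (X * Phi L omega n) Y)" "j < dim_col (khatri_rao (X * Phi L omega n) Y)"
  then have i: "i < dim_row X * dim_row Y" and j: "j < L" using assms by (auto simp: mult_Phi)
  then have "dim_row Y > 0" by (cases "dim_row Y") auto
  then have "i mod dim_row Y < dim_row Y" by simp
  moreover have "i div dim_row Y < dim_row X" using i by (simp add: less_mult_imp_div_less)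
  ultimately show "(khatri_rao X Y * Phi L omega n) $$ (i, j) = khatri_rao (X * Phi L omega n) Y $$ (i, j)"
    using i j assms by (simp add: mult_Phi khatri_rao_def)
qed (use assms in \<open>auto simp: mult_Phi\<close>)

lemma kr_Phi2: assumes "dim_col X = L" "dim_col Y = L"
  shows "khatri_rao X Y * Phi L omega n = khatri_rao X (Y * Phi L omega n)"
proof (rule eq_matI)
  fix i j assume "i < dim_row (khatri_rao X (Y * Phi L omega n))" "j < dim_col (khatri_rao X (Y * Phi L omega n))"
  then have i: "i < dim_row X * dim_row Y" and j: "j < L" using assms by (auto simp: mult_Phi)
  then have "dim_row Y > 0" by (cases "dim_row Y") auto
  then have "i mod dim_row Y < dim_row Y" by simp
  moreover have "i div dim_row Y < dim_row X" using i by (simp add: less_mult_imp_div_less)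
  ultimately show "(khatri_rao X Y * Phi L omega n) $$ (i, j) = khatri_rao X (Y * Phi L omega n) $$ (i, j)"
    using i j assms by (simp add: mult_Phi khatri_rao_def)
qed (use assms in \<open>auto simp: mult_Phi\<close>)

lemma if01_mult: "(if P then 1 else 0) * (x::complex) = (if P then x else 0)" by simp

lemma sel1_mult: "X \<in> carrier_mat M n \<Longrightarrow> sel1 M * X = mat (M-1) n (\<lambda>(i,j). X $$ (i,j))"
  by (rule eq_matI) (auto simp: sel1_def scalar_prod_def if01_mult)

lemma sel2_mult: "X \<in> carrier_mat M n \<Longrightarrow> sel2 M * X = mat (M-1) n (\<lambda>(i,j). X $$ (Suc i,j))"
  by (rule eq_matI) (auto simp: sel2_def scalar_prod_def if01_mult)

lemma exp_Suc: "exp (\<i> * complex_of_real (real (Suc m) * w)) = exp (\<i> * complex_of_real (real m * w)) * exp (\<i> * complex_of_real w)"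
  by (simp add: exp_add[symmetric] algebra_simps)

lemma steer_carrier[simp]: "steer K L omega n \<in> carrier_mat K L" by (simp add: steer_def)

lemma key5: "sel1 K * steer K L omega n * Phi L omega n = sel2 K * steer K L omega n"
proof -
  have S: "steer K L omega n \<in> carrier_mat K L" by simp
  show ?thesis
    unfolding sel1_mult[OF S] sel2_mult[OF S]
    by (subst mult_Phi) (auto simp: steer_def ee_def exp_add[symmetric] algebra_simps intro!: eq_matI)
qed

lemma key14:
  assumes M: "M \<ge> 2" and T: "T \<in> carrier_mat M N" and F: "F \<in> carrier_mat N N"
    and Q: "Q \<in> carrier_mat N N"
    and shift: "sel1 M * T = sel2 M * T * F"
    and Ql: "Q *\<^sub>v col (mat_adjoint T) (M - 1) = 0\<^sub>v N"
    and Qf: "Q *\<^sub>v (mat_adjoint F *\<^sub>v col (mat_adjoint T) 0) = 0\<^sub>v N"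
  shows "Q * (mat_adjoint T * steer M L omega n) * Phi L omega n
       = (Q * mat_adjoint F) * (mat_adjoint T * steer M L omega n)"
proof -
  define Th where "Th = mat_adjoint T"
  define A where "A = steer M L omega n"
  define G where "G = Q * Th"
  define W where "W = mat_adjoint F * Th"
  define H where "H = Q * W"
  have Th: "Th \<in> carrier_mat N M" using T by (simp add: Th_def)
  have Fh: "mat_adjoint F \<in> carrier_mat N N" using F by simp
  have A: "A \<in> carrier_mat M L" by (simp add: A_def)
  have G: "G \<in> carrier_mat N M" using Q Th by (simp add: G_def)
  have W: "W \<in> carrier_mat N M" using Fh Th by (simp add: W_def)
  have H: "H \<in> carrier_mat N M" using Q W by (simp add: H_def)
  have L1: "Q * (Th * A) = G * A" using Q Th A by (simp add: G_def assoc_mult_mat)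
  have R1: "(Q * mat_adjoint F) * (Th * A) = H * A"
  proof -
    have "(Q * mat_adjoint F) * (Th * A) = ((Q * mat_adjoint F) * Th) * A"
      using Q Th A Fh by (metis assoc_mult_mat mult_carrier_mat)
    also have "(Q * mat_adjoint F) * Th = Q * W"
      using Q Th Fh by (simp add: W_def assoc_mult_mat)
    finally show ?thesis by (simp add: H_def)
  qed
  have sh: "(T * F) $$ (Suc m, j) = T $$ (m, j)" if m: "m < M - 1" and j: "j < N" for m j
  proof -
    have "(sel1 M * T) $$ (m, j) = (sel2 M * T * F) $$ (m, j)" using shift by simp
    then show ?thesis using m j T F
      by (simp add: sel1_mult[OF T] sel2_mult[OF T] scalar_prod_def row_def col_def)
  qed
  have Wc: "col W (Suc m) = col Th m" if m: "m < M - 1" for m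
  proof (rule eq_vecI)
    fix j assume j: "j < dim_vec (col Th m)"
    then have j': "j < N" using Th by simp
    have "col W (Suc m) $ j = (\<Sum>k<N. cnj (F $$ (k, j)) * cnj (T $$ (Suc m, k)))"
      using j' m T F by (simp add: W_def Th_def adj_eq scalar_prod_def lessThan_atLeast0 row_def col_def)
    also have "\<dots> = cnj ((T * F) $$ (Suc m, j))"
      using j' m T F by (simp add: scalar_prod_def lessThan_atLeast0 row_def col_def mult.commute)
    also have "\<dots> = col Th m $ j" using sh[OF m j'] j' m T by (simp add: Th_def adj_eq)
    finally show "col W (Suc m) $ j = col Th m $ j" .
  qed (use W Th in auto)
  obtain M' where M': "M = Suc M'" and M'1: "M' \<ge> 1" using M by (cases M) auto
  have Gl: "G $$ (r, M') = 0" if r: "r < N" for r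
  proof -
    have "G $$ (r, M') = (Q *\<^sub>v col Th M') $ r" using r Q Th M' by (simp add: G_def)
    then show ?thesis using Ql r M' by (simp add: Th_def)
  qed
  have H0: "H $$ (r, 0) = 0" if r: "r < N" for r
  proof -
    have "H $$ (r, 0) = (Q *\<^sub>v col W 0) $ r" using r Q W M' by (simp add: H_def)
    also have "col W 0 = mat_adjoint F *\<^sub>v col Th 0" unfolding W_def by (rule col_mult2[OF Fh Th]) (simp add: M')
    finally show ?thesis using Qf r by (simp add: Th_def)
  qed
  have HS: "H $$ (r, Suc m) = G $$ (r, m)" if r: "r < N" and m: "m < M'" for r m
    using r m Q W Th M' Wc[of m] by (simp add: H_def G_def)
  show ?thesis
    unfolding Th_def[symmetric] A_def[symmetric] L1 R1
  proof (subst mult_Phi)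
    show "dim_col (G * A) = L" using A by simp
    show "mat (dim_row (G * A)) L (\<lambda>(r, c). (G * A) $$ (r, c) * ee omega n c) = H * A"
    proof (rule eq_matI)
      fix r l assume "r < dim_row (H * A)" "l < dim_col (H * A)"
      then have r: "r < N" and l: "l < L" using H A by auto
      define e where "e = (\<lambda>m::nat. exp (\<i> * complex_of_real (real m * omega (Suc l) n)))"
      have GA: "(G * A) $$ (r, l) = (\<Sum>m<M. G $$ (r, m) * e m)"
        using r l G A by (simp add: A_def steer_def e_def scalar_prod_def lessThan_atLeast0 row_def col_def)
      have HA: "(H * A) $$ (r, l) = (\<Sum>m<M. H $$ (r, m) * e m)"
        using r l H A by (simp add: A_def steer_def e_def scalar_prod_def lessThan_atLeast0 row_def col_def)
      have eS: "e (Suc m) = e m * ee omega n l" for m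
        by (simp add: e_def ee_def exp_add[symmetric] algebra_simps)
      have "(\<Sum>m<M. G $$ (r, m) * e m) * ee omega n l = (\<Sum>m<M. G $$ (r, m) * e (Suc m))"
        by (simp add: sum_distrib_right eS mult.assoc)
      also have "\<dots> = (\<Sum>m<M'. G $$ (r, m) * e (Suc m))"
        using Gl[OF r] by (simp add: M')
      also have "\<dots> = (\<Sum>m<M'. H $$ (r, Suc m) * e (Suc m))"
        using HS[OF r] by simp
      also have "\<dots> = (\<Sum>m<M. H $$ (r, m) * e m)"
        using H0[OF r] unfolding M' sum.lessThan_Suc_shift by simp
      finally show "mat (dim_row (G * A)) L (\<lambda>(r, c). (G * A) $$ (r, c) * ee omega n c) $$ (r, l) = (H * A) $$ (r, l)"
        using r l G GA HA by simp
    qed (use G H A in auto)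
  qed
qed

lemma kron_carrier: "A \<in> carrier_mat m1 n1 \<Longrightarrow> B \<in> carrier_mat m2 n2 \<Longrightarrow> kron A B \<in> carrier_mat (m1*m2) (n1*n2)"
  by (simp add: kron_def)
lemma kr_carrier2: "X \<in> carrier_mat m1 c \<Longrightarrow> Y \<in> carrier_mat m2 c \<Longrightarrow> khatri_rao X Y \<in> carrier_mat (m1*m2) c"
  by (simp add: khatri_rao_def)

lemma kr4:
  assumes "A1 \<in> carrier_mat m1 n1" "A2 \<in> carrier_mat m2 n2" "A3 \<in> carrier_mat m3 n3"
    "A4 \<in> carrier_mat m4 n4" "A5 \<in> carrier_mat m5 n5"
    "X1 \<in> carrier_mat n1 c" "X2 \<in> carrier_mat n2 c" "X3 \<in> carrier_mat n3 c"
    "X4 \<in> carrier_mat n4 c" "X5 \<in> carrier_mat n5 c"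
  shows "kron (kron (kron (kron A1 A2) A3) A4) A5 * khatri_rao (khatri_rao (khatri_rao (khatri_rao X1 X2) X3) X4) X5
    = khatri_rao (khatri_rao (khatri_rao (khatri_rao (A1*X1) (A2*X2)) (A3*X3)) (A4*X4)) (A5*X5)"
proof -
  note kc = kron_carrier kr_carrier2
  have a12: "kron A1 A2 \<in> carrier_mat (m1*m2) (n1*n2)" using assms by (intro kc)
  have a123: "kron (kron A1 A2) A3 \<in> carrier_mat (m1*m2*m3) (n1*n2*n3)" using assms a12 by (intro kc)
  have a1234: "kron (kron (kron A1 A2) A3) A4 \<in> carrier_mat (m1*m2*m3*m4) (n1*n2*n3*n4)" using assms a123 by (intro kc)
  have x12: "khatri_rao X1 X2 \<in> carrier_mat (n1*n2) c" using assms by (intro kc)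
  have x123: "khatri_rao (khatri_rao X1 X2) X3 \<in> carrier_mat (n1*n2*n3) c" using assms x12 by (intro kc)
  have x1234: "khatri_rao (khatri_rao (khatri_rao X1 X2) X3) X4 \<in> carrier_mat (n1*n2*n3*n4) c" using assms x123 by (intro kc)
  show ?thesis
    using kron_kr[OF a1234 assms(5) x1234 assms(10)] kron_kr[OF a123 assms(4) x123 assms(9)]
      kron_kr[OF a12 assms(3) x12 assms(8)] kron_kr[OF assms(1,2,6,7)] by simp
qed


lemma kr5_Phi:
  assumes "dim_col X1 = L" "dim_col X2 = L" "dim_col X3 = L" "dim_col X4 = L" "dim_col X5 = L"
  shows "khatri_rao (khatri_rao (khatri_rao (khatri_rao X1 X2) X3) X4) X5 * Phi L omega n
          = khatri_rao (khatri_rao (khatri_rao (khatri_rao (X1 * Phi L omega n) X2) X3) X4) X5"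
    and "khatri_rao (khatri_rao (khatri_rao (khatri_rao X1 X2) X3) X4) X5 * Phi L omega n
          = khatri_rao (khatri_rao (khatri_rao (khatri_rao X1 (X2 * Phi L omega n)) X3) X4) X5"
    and "khatri_rao (khatri_rao (khatri_rao (khatri_rao X1 X2) X3) X4) X5 * Phi L omega n
          = khatri_rao (khatri_rao (khatri_rao (khatri_rao X1 X2) (X3 * Phi L omega n)) X4) X5"
    and "khatri_rao (khatri_rao (khatri_rao (khatri_rao X1 X2) X3) X4) X5 * Phi L omega n
          = khatri_rao (khatri_rao (khatri_rao (khatri_rao X1 X2) X3) (X4 * Phi L omega n)) X5"
    and "khatri_rao (khatri_rao (khatri_rao (khatri_rao X1 X2) X3) X4) X5 * Phi L omega n
          = khatri_rao (khatri_rao (khatri_rao (khatri_rao X1 X2) X3) X4) (X5 * Phi L omega n)"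
  using assms
  apply (simp add: assms kr_Phi1[where X="khatri_rao (khatri_rao (khatri_rao X1 X2) X3) X4" and Y=X5] kr_Phi1[where X="khatri_rao (khatri_rao X1 X2) X3" and Y=X4] kr_Phi1[where X="khatri_rao X1 X2" and Y=X3] kr_Phi1[where X=X1 and Y=X2])
  apply (simp add: assms kr_Phi1[where X="khatri_rao (khatri_rao (khatri_rao X1 X2) X3) X4" and Y=X5] kr_Phi1[where X="khatri_rao (khatri_rao X1 X2) X3" and Y=X4] kr_Phi1[where X="khatri_rao X1 X2" and Y=X3] kr_Phi2[where X=X1 and Y=X2])
  apply (simp add: assms kr_Phi1[where X="khatri_rao (khatri_rao (khatri_rao X1 X2) X3) X4" and Y=X5] kr_Phi1[where X="khatri_rao (khatri_rao X1 X2) X3" and Y=X4] kr_Phi2[where X="khatri_rao X1 X2" and Y=X3])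
  apply (simp add: assms kr_Phi1[where X="khatri_rao (khatri_rao (khatri_rao X1 X2) X3) X4" and Y=X5] kr_Phi2[where X="khatri_rao (khatri_rao X1 X2) X3" and Y=X4])
  apply (simp add: assms kr_Phi2[where X="khatri_rao (khatri_rao (khatri_rao X1 X2) X3) X4" and Y=X5])
  done

theorem proposition2:
  fixes L K5 :: nat
    and M N :: "nat \<Rightarrow> nat"
    and omega :: "nat \<Rightarrow> nat \<Rightarrow> real"
    and T F Q :: "nat \<Rightarrow> complex mat"
  assumes L_pos: "L \<ge> 1"
    and M_ge: "\<forall>n\<in>{1..5}. M n \<ge> 2"
    and N_ge: "\<forall>n\<in>{1..4}. N n \<ge> 1"
    and K5_ge: "K5 \<ge> 2"
    and T_dim: "\<forall>n\<in>{1..4}. T n \<in> carrier_mat (M n) (N n)"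
    and F_dim: "\<forall>n\<in>{1..4}. F n \<in> carrier_mat (N n) (N n)"
    and F_inv: "\<forall>n\<in>{1..4}. invertible_mat (F n)"
    and shift: "\<forall>n\<in>{1..4}. sel1 (M n) * T n = sel2 (M n) * T n * F n"
    and Q_dim: "\<forall>n\<in>{1..4}. Q n \<in> carrier_mat (N n) (N n)"
    and Q_last: "\<forall>n\<in>{1..4}. Q n *\<^sub>v col (mat_adjoint (T n)) (M n - 1) = 0\<^sub>v (N n)"
    and Q_first: "\<forall>n\<in>{1..4}. Q n *\<^sub>v (mat_adjoint (F n) *\<^sub>v col (mat_adjoint (T n)) 0) = 0\<^sub>v (N n)"
  shows
    "let Lm = (\<lambda>n (i::nat). if i = 1 then Q n else Q n * mat_adjoint (F n));
         B = (\<lambda>n. mat_adjoint (T n) * steer (M n) L omega n);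
         P = khatri_rao (khatri_rao (khatri_rao (khatri_rao (B 1) (B 2)) (B 3)) (B 4)) (steer K5 L omega 5);
         fac = (\<lambda>n i k. if k = n then Lm n i else 1\<^sub>m (N k));
         Jb = (\<lambda>n i. if n = 5 then
                 kron (kron (kron (kron (1\<^sub>m (N 1)) (1\<^sub>m (N 2))) (1\<^sub>m (N 3))) (1\<^sub>m (N 4)))
                      (if i = 1 then sel1 K5 else sel2 K5)
               else kron (kron (kron (kron (fac n i 1) (fac n i 2)) (fac n i 3)) (fac n i 4)) (1\<^sub>m K5))
     in \<forall>n\<in>{1..5}. Jb n 1 * P * Phi L omega n = Jb n 2 * P"
proof -
  define Lm where "Lm = (\<lambda>n (i::nat). if i = 1 then Q n else Q n * mat_adjoint (F n))"
  define B where "B = (\<lambda>n. mat_adjoint (T n) * steer (M n) L omega n)"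
  define A5 where "A5 = steer K5 L omega 5"
  define P where "P = khatri_rao (khatri_rao (khatri_rao (khatri_rao (B 1) (B 2)) (B 3)) (B 4)) A5"
  define fac where "fac = (\<lambda>n i k. if k = n then Lm n i else 1\<^sub>m (N k))"
  define Jb where "Jb = (\<lambda>n i. if n = 5 then
                 kron (kron (kron (kron (1\<^sub>m (N 1)) (1\<^sub>m (N 2))) (1\<^sub>m (N 3))) (1\<^sub>m (N 4)))
                      (if i = 1 then sel1 K5 else sel2 K5)
               else kron (kron (kron (kron (fac n i 1) (fac n i 2)) (fac n i 3)) (fac n i 4)) (1\<^sub>m K5))"
  let ?Ph = "Phi L omega"
  have Bc: "B k \<in> carrier_mat (N k) L" if "k \<in> {1..4}" for k
  proof -
    have "T k \<in> carrier_mat (M k) (N k)" using T_dim that by auto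
    then show ?thesis unfolding B_def by (intro mult_carrier_mat[of _ _ "M k"]) auto
  qed
  have A5c: "A5 \<in> carrier_mat K5 L" by (simp add: A5_def)
  have Lmc: "Lm k i \<in> carrier_mat (N k) (N k)" if "k \<in> {1..4}" for k i
  proof -
    have "Q k \<in> carrier_mat (N k) (N k)" "F k \<in> carrier_mat (N k) (N k)" using Q_dim F_dim that by auto
    then show ?thesis unfolding Lm_def by (auto intro!: mult_carrier_mat[of _ _ "N k"])
  qed
  have facc: "fac n i k \<in> carrier_mat (N k) (N k)" if "n \<in> {1..4}" "k \<in> {1..4}" for n i k
    using Lmc that by (auto simp: fac_def)
  have facB: "fac n i k * B k = B k" if "k \<noteq> n" "k \<in> {1..4}" for n i k
    using Bc[OF that(2)] that by (simp add: fac_def)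
  have keyn: "fac n 1 n * B n * ?Ph n = fac n 2 n * B n" if n: "n \<in> {1..4}" for n
  proof -
    have "M n \<ge> 2" using M_ge n by auto
    from key14[OF this, of "T n" "N n" "F n" "Q n" L omega n] T_dim F_dim Q_dim shift Q_last Q_first n
    show ?thesis by (simp add: fac_def Lm_def B_def)
  qed
  have JbP: "Jb n i * P = khatri_rao (khatri_rao (khatri_rao (khatri_rao (fac n i 1 * B 1) (fac n i 2 * B 2)) (fac n i 3 * B 3)) (fac n i 4 * B 4)) A5"
    if n: "n \<in> {1..4}" for n i
  proof -
    have "n \<noteq> 5" using n by auto
    then have "Jb n i * P = khatri_rao (khatri_rao (khatri_rao (khatri_rao (fac n i 1 * B 1) (fac n i 2 * B 2)) (fac n i 3 * B 3)) (fac n i 4 * B 4)) (1\<^sub>m K5 * A5)"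
      unfolding Jb_def P_def
      by (simp only: if_False) (rule kr4[OF facc[OF n] facc[OF n] facc[OF n] facc[OF n] one_carrier_mat Bc Bc Bc Bc A5c]; simp)
    then show ?thesis using A5c by simp
  qed
  have J5P: "Jb 5 i * P = khatri_rao (khatri_rao (khatri_rao (khatri_rao (B 1) (B 2)) (B 3)) (B 4)) ((if i = 1 then sel1 K5 else sel2 K5) * A5)" for i
  proof -
    have sc: "(if i = 1 then sel1 K5 else sel2 K5) \<in> carrier_mat (K5 - 1) K5"
      by (simp add: sel1_def sel2_def)
    have "Jb 5 i * P = khatri_rao (khatri_rao (khatri_rao (khatri_rao (1\<^sub>m (N 1) * B 1) (1\<^sub>m (N 2) * B 2)) (1\<^sub>m (N 3) * B 3)) (1\<^sub>m (N 4) * B 4)) ((if i = 1 then sel1 K5 else sel2 K5) * A5)"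
      unfolding Jb_def P_def
      by (simp only: if_P[OF refl]) (rule kr4[OF one_carrier_mat one_carrier_mat one_carrier_mat one_carrier_mat sc Bc Bc Bc Bc A5c]; simp)
    moreover have "1\<^sub>m (N k) * B k = B k" if "k \<in> {1..4}" for k using Bc[OF that] by simp
    ultimately show ?thesis by simp
  qed
  have main: "\<forall>n\<in>{1..5}. Jb n 1 * P * ?Ph n = Jb n 2 * P"
  proof
    fix n :: nat assume n: "n \<in> {1..5}"
    note dims = Bc[of 1] Bc[of 2] Bc[of 3] Bc[of 4] A5c
    note kP = kr_Phi1 kr_Phi2
    have "n = 1 \<or> n = 2 \<or> n = 3 \<or> n = 4 \<or> n = 5" using n unfolding atLeastAtMost_iff by presburger
    then consider "n = 1" | "n = 2" | "n = 3" | "n = 4" | "n = 5" by blast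
    then show "Jb n 1 * P * ?Ph n = Jb n 2 * P"
    proof cases
      case 1
      show ?thesis unfolding 1
        apply (subst JbP[of 1 1], simp)
        apply (subst JbP[of 1 2], simp)
        apply (subst kr5_Phi(1))
        using dims facc[of 1] facB[of 2 1] facB[of 3 1] facB[of 4 1] keyn[of 1]
        by (simp_all)
    next
      case 2
      show ?thesis unfolding 2
        apply (subst JbP[of 2 1], simp)
        apply (subst JbP[of 2 2], simp)
        apply (subst kr5_Phi(2))
        using dims facc[of 2] facB[of 1 2] facB[of 3 2] facB[of 4 2] keyn[of 2]
        by (simp_all)
    next
      case 3
      show ?thesis unfolding 3
        apply (subst JbP[of 3 1], simp)
        apply (subst JbP[of 3 2], simp)
        apply (subst kr5_Phi(3))
        using dims facc[of 3] facB[of 1 3] facB[of 2 3] facB[of 4 3] keyn[of 3]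
        by (simp_all)
    next
      case 4
      show ?thesis unfolding 4
        apply (subst JbP[of 4 1], simp)
        apply (subst JbP[of 4 2], simp)
        apply (subst kr5_Phi(4))
        using dims facc[of 4] facB[of 1 4] facB[of 2 4] facB[of 3 4] keyn[of 4]
        by (simp_all)
    next
      case 5
      show ?thesis unfolding 5 J5P
        apply (subst kr5_Phi(5))
        using dims key5[of K5 L omega 5]
        by (simp_all add: A5_def steer_def)
    qed
  qed
  show ?thesis unfolding Let_def
    using main unfolding Jb_def fac_def Lm_def P_def B_def A5_def .
qed

end
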